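(* CAP has at most one solution.
   Context: Let $s:[0,B]\to[0,\infty)$ satisfy $s(0)=0$, be strictly increasing, strictly concave, differentiable, with $s'$ continuous on $[0,B]$ (so $s'>0$ is strictly decreasing). Fix $b\in(0,B]$, an integer $k\ge2$, and constants $c_1\ge c_2\ge\cdots\ge c_k>0$. The Constrained Allocation Problem (CAP) is: find $\theta_1,\dots,\theta_k\ge0$ such that (i) $\theta_1+\cdots+\theta_k=b$; (ii) $\theta_1\le\theta_2\le\cdots\le\theta_k$; (iii) $s'(\theta_j)/s'(\theta_i)=c_j/c_i$ whenever $i<j$ and $\theta_j\ge\theta_i>0$; (iv) $s'(\theta_j)/s'(0)\ge c_j/c_i$ whenever $i<j$ and $\theta_j>\theta_i=0$. *)

theory Defs
  imports "HOL-Analysis.Analysis"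
begin

definition strictly_concave_on :: "real set \<Rightarrow> (real \<Rightarrow> real) \<Rightarrow> bool" where
  "strictly_concave_on S f \<longleftrightarrow>
     (\<forall>x\<in>S. \<forall>y\<in>S. \<forall>t. x \<noteq> y \<and> 0 < t \<and> t < 1 \<longrightarrow>
        f ((1 - t) * x + t * y) > (1 - t) * f x + t * f y)"

text \<open>Solutions of the Constrained Allocation Problem, indices 1..k.
  The argument ds is the derivative s' of s.\<close>
definition CAP_solution ::
  "(real \<Rightarrow> real) \<Rightarrow> real \<Rightarrow> nat \<Rightarrow> (nat \<Rightarrow> real) \<Rightarrow> (nat \<Rightarrow> real) \<Rightarrow> bool" where
  "CAP_solution ds b k c \<theta> \<longleftrightarrow>
     (\<forall>i\<in>{1..k}. \<theta> i \<ge> 0) \<and>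
     (\<Sum>i=1..k. \<theta> i) = b \<and>
     (\<forall>i j. 1 \<le> i \<and> i \<le> j \<and> j \<le> k \<longrightarrow> \<theta> i \<le> \<theta> j) \<and>
     (\<forall>i j. 1 \<le> i \<and> i < j \<and> j \<le> k \<and> \<theta> j \<ge> \<theta> i \<and> \<theta> i > 0 \<longrightarrow>
        ds (\<theta> j) / ds (\<theta> i) = c j / c i) \<and>
     (\<forall>i j. 1 \<le> i \<and> i < j \<and> j \<le> k \<and> \<theta> j > \<theta> i \<and> \<theta> i = 0 \<longrightarrow>
        ds (\<theta> j) / ds 0 \<ge> c j / c i)"

end

theory Submission
  imports Defs
begin

lemma slope_ge:
  fixes s ds :: "real \<Rightarrow> real"
  assumes conc: "strictly_concave_on {0..B} s"
    and x: "x \<in> {0..B}" and y: "y \<in> {0..B}" and z: "x < z" "z < y"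
  shows "(s z - s x) / (z - x) \<ge> (s y - s x) / (y - x)"
proof -
  define t where "t = (z - x) / (y - x)"
  have t: "0 < t" "t < 1" using z by (auto simp: t_def field_simps)
  have tt: "t * (y - x) = z - x" using z by (simp add: t_def)
  have zt: "z = (1 - t) * x + t * y" using tt by (simp add: algebra_simps)
  have "s z > (1 - t) * s x + t * s y"
    using conc x y t z unfolding strictly_concave_on_def zt by auto
  hence "s z - s x > t * (s y - s x)" by (simp add: algebra_simps)
  hence "(s z - s x) / (z - x) > t * (s y - s x) / (z - x)" using z by (simp add: divide_strict_right_mono)
  also have "t * (s y - s x) / (z - x) = t * (s y - s x) / (t * (y - x))" using tt by simp
  also have "\<dots> = (s y - s x) / (y - x)" using t by simp
  finally show ?thesis by simp
qed

lemma slope_le: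
  fixes s ds :: "real \<Rightarrow> real"
  assumes conc: "strictly_concave_on {0..B} s"
    and x: "x \<in> {0..B}" and y: "y \<in> {0..B}" and z: "y < z" "z < x"
  shows "(s z - s x) / (z - x) \<le> (s y - s x) / (y - x)"
proof -
  define t where "t = (z - x) / (y - x)"
  have t: "0 < t" "t < 1" using z by (auto simp: t_def field_simps)
  have tt: "t * (y - x) = z - x" using z by (simp add: t_def)
  have zt: "z = (1 - t) * x + t * y" using tt by (simp add: algebra_simps)
  have "s z > (1 - t) * s x + t * s y"
    using conc x y t z unfolding strictly_concave_on_def zt by auto
  hence "s z - s x > t * (s y - s x)" by (simp add: algebra_simps)
  hence "(s z - s x) / (z - x) < t * (s y - s x) / (z - x)" using z by (simp add: divide_strict_right_mono_neg)
  also have "t * (s y - s x) / (z - x) = t * (s y - s x) / (t * (y - x))" using tt by simp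
  also have "\<dots> = (s y - s x) / (y - x)" using t by simp
  finally show ?thesis by simp
qed

lemma tangent:
  fixes s ds :: "real \<Rightarrow> real"
  assumes conc: "strictly_concave_on {0..B} s"
    and der: "\<forall>x\<in>{0..B}. (s has_real_derivative ds x) (at x within {0..B})"
    and x: "x \<in> {0..B}" and y: "y \<in> {0..B}"
  shows "s y - s x \<le> ds x * (y - x)"
proof (cases x y rule: linorder_cases)
  case less
  have "(s has_real_derivative ds x) (at x within {x..y})"
    by (rule DERIV_subset[of _ _ _ "{0..B}"]) (use der x y in auto)
  hence lim: "((\<lambda>z. (s z - s x) / (z - x)) \<longlongrightarrow> ds x) (at_right x)"
    using less by (simp add: has_field_derivative_iff at_within_Icc_at_right)
  have "(s y - s x) / (y - x) \<le> ds x"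
  proof (rule tendsto_lowerbound[OF lim])
    show "\<forall>\<^sub>F z in at_right x. (s y - s x) / (y - x) \<le> (s z - s x) / (z - x)"
      unfolding eventually_at_right[OF less]
      by (intro exI[of _ y]) (use less slope_ge[OF conc x y] in auto)
  qed simp
  thus ?thesis using less by (simp add: field_simps)
next
  case greater
  have "(s has_real_derivative ds x) (at x within {y..x})"
    by (rule DERIV_subset[of _ _ _ "{0..B}"]) (use der x y in auto)
  hence lim: "((\<lambda>z. (s z - s x) / (z - x)) \<longlongrightarrow> ds x) (at_left x)"
    using greater by (simp add: has_field_derivative_iff at_within_Icc_at_left)
  have "(s y - s x) / (y - x) \<ge> ds x"
  proof (rule tendsto_upperbound[OF lim])
    show "\<forall>\<^sub>F z in at_left x. (s y - s x) / (y - x) \<ge> (s z - s x) / (z - x)"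
      unfolding eventually_at_left[OF greater]
      by (intro exI[of _ y]) (use greater slope_le[OF conc x y] in auto)
  qed simp
  thus ?thesis using greater by (simp add: field_simps)
qed simp

lemma ds_strict_decr:
  fixes s ds :: "real \<Rightarrow> real"
  assumes conc: "strictly_concave_on {0..B} s"
    and der: "\<forall>x\<in>{0..B}. (s has_real_derivative ds x) (at x within {0..B})"
    and x: "x \<in> {0..B}" and y: "y \<in> {0..B}" and xy: "x < y"
  shows "ds y < ds x"
proof -
  define m where "m = (x + y) / 2"
  have m: "m \<in> {0..B}" using x y by (auto simp: m_def)
  have "s ((1 - 1/2) * x + (1/2) * y) > (1 - 1/2) * s x + (1/2) * s y"
  proof -
    have H: "\<forall>t. x \<noteq> y \<and> 0 < t \<and> t < 1 \<longrightarrow> s ((1 - t) * x + t * y) > (1 - t) * s x + t * s y"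
      using conc x y unfolding strictly_concave_on_def by blast
    show ?thesis using spec[OF H, of "1/2"] xy by linarith
  qed
  moreover have "(1 - 1/2) * x + (1/2) * y = m" by (simp add: m_def field_simps)
  ultimately have "s m > (1 - 1/2) * s x + (1/2) * s y" by simp
  moreover have "s m - s x \<le> ds x * (m - x)" using tangent[OF conc der x m] .
  moreover have "s m - s y \<le> ds y * (m - y)" using tangent[OF conc der y m] .
  ultimately have "ds y * (y - x) < ds x * (y - x)" unfolding m_def by (simp add: algebra_simps)
  thus ?thesis using xy by (simp add: mult_less_cancel_right)
qed


lemma sol_props:
  fixes ds :: "real \<Rightarrow> real" and c :: "nat \<Rightarrow> real"
  assumes sol: "CAP_solution ds b k c \<theta>" and b: "0 < b" and k: "2 \<le> k"
    and cpos: "\<forall>i\<in>{1..k}. c i > 0" and d0: "ds 0 > 0"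
  shows "\<theta> k > 0"
    and "\<forall>i\<in>{1..k}. 0 \<le> \<theta> i \<and> \<theta> i \<le> b"
    and "\<forall>i\<in>{1..k}. \<theta> i > 0 \<longrightarrow> ds (\<theta> i) = ds (\<theta> k) / c k * c i"
    and "\<forall>i\<in>{1..k}. \<theta> i = 0 \<longrightarrow> ds 0 \<le> ds (\<theta> k) / c k * c i"
proof -
  have nn: "\<forall>i\<in>{1..k}. \<theta> i \<ge> 0" and sm: "(\<Sum>i=1..k. \<theta> i) = b"
    and mono: "\<forall>i j. 1 \<le> i \<and> i \<le> j \<and> j \<le> k \<longrightarrow> \<theta> i \<le> \<theta> j"
    and pp: "\<forall>i j. 1 \<le> i \<and> i < j \<and> j \<le> k \<and> \<theta> j \<ge> \<theta> i \<and> \<theta> i > 0 \<longrightarrow>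
        ds (\<theta> j) / ds (\<theta> i) = c j / c i"
    and zp: "\<forall>i j. 1 \<le> i \<and> i < j \<and> j \<le> k \<and> \<theta> j > \<theta> i \<and> \<theta> i = 0 \<longrightarrow>
        ds (\<theta> j) / ds 0 \<ge> c j / c i"
    using sol unfolding CAP_solution_def by blast+
  show tk: "\<theta> k > 0"
  proof (rule ccontr)
    assume "\<not> \<theta> k > 0"
    hence "\<forall>i\<in>{1..k}. \<theta> i = 0"
    proof (intro ballI)
      fix i assume i: "i \<in> {1..k}" and nk: "\<not> \<theta> k > 0"
      have "\<theta> i \<le> \<theta> k" using mono i by auto
      thus "\<theta> i = 0" using nn i nk by force
    qed
    hence "(\<Sum>i=1..k. \<theta> i) = 0" by simp
    thus False using sm b by simp
  qed
  show "\<forall>i\<in>{1..k}. 0 \<le> \<theta> i \<and> \<theta> i \<le> b"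
  proof
    fix i assume i: "i \<in> {1..k}"
    have "\<theta> i \<le> (\<Sum>i=1..k. \<theta> i)"
      by (rule member_le_sum) (use i nn in auto)
    thus "0 \<le> \<theta> i \<and> \<theta> i \<le> b" using sm nn i by auto
  qed
  have ck: "c k > 0" using cpos k by auto
  show "\<forall>i\<in>{1..k}. \<theta> i > 0 \<longrightarrow> ds (\<theta> i) = ds (\<theta> k) / c k * c i"
  proof (intro ballI impI)
    fix i assume i: "i \<in> {1..k}" and p: "\<theta> i > 0"
    show "ds (\<theta> i) = ds (\<theta> k) / c k * c i"
    proof (cases "i = k")
      case False
      hence ik: "i < k" using i by auto
      have ci: "c i > 0" using cpos i by auto
      have "\<theta> i \<le> \<theta> k" using mono i by auto
      hence e: "ds (\<theta> k) / ds (\<theta> i) = c k / c i" using pp i ik p by auto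
      have "c k / c i > 0" using ck ci by simp
      hence "ds (\<theta> i) \<noteq> 0" using e by auto
      thus ?thesis using e ci ck by (simp add: field_simps)
    qed (use ck in simp)
  qed
  show "\<forall>i\<in>{1..k}. \<theta> i = 0 \<longrightarrow> ds 0 \<le> ds (\<theta> k) / c k * c i"
  proof (intro ballI impI)
    fix i assume i: "i \<in> {1..k}" and z: "\<theta> i = 0"
    have ik: "i < k" using i z tk by (cases "i = k") auto
    have ci: "c i > 0" using cpos i by auto
    have e: "ds (\<theta> k) / ds 0 \<ge> c k / c i" using zp i ik z tk by auto
    hence "ds (\<theta> k) \<ge> c k / c i * ds 0" using d0 by (simp add: field_simps)
    thus "ds 0 \<le> ds (\<theta> k) / c k * c i" using ci ck by (simp add: field_simps)
  qed
qed

lemma cmp_less: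
  fixes d :: "real \<Rightarrow> real" and c :: "nat \<Rightarrow> real"
  assumes dec: "\<And>x y. x \<in> {0..B} \<Longrightarrow> y \<in> {0..B} \<Longrightarrow> x < y \<Longrightarrow> d y < d x"
    and cpos: "\<forall>i\<in>{1..k}. c i > 0" and k: "1 \<le> k"
    and r1: "\<forall>i\<in>{1..k}. 0 \<le> \<theta> i \<and> \<theta> i \<le> B"
    and r2: "\<forall>i\<in>{1..k}. 0 \<le> \<eta> i \<and> \<eta> i \<le> B"
    and s: "(\<Sum>i=1..k. \<theta> i) = (\<Sum>i=1..k. \<eta> i)"
    and ek: "\<eta> k > 0"
    and p1: "\<forall>i\<in>{1..k}. \<theta> i > 0 \<longrightarrow> d (\<theta> i) = l1 * c i"
    and z1: "\<forall>i\<in>{1..k}. \<theta> i = 0 \<longrightarrow> d 0 \<le> l1 * c i"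
    and p2: "\<forall>i\<in>{1..k}. \<eta> i > 0 \<longrightarrow> d (\<eta> i) = l2 * c i"
    and l: "l1 < l2"
  shows False
proof -
  have key: "\<eta> i \<le> \<theta> i \<and> (\<eta> i > 0 \<longrightarrow> \<eta> i < \<theta> i)" if i: "i \<in> {1..k}" for i
  proof (cases "\<eta> i > 0")
    case True
    have ci: "c i > 0" using cpos i by auto
    have de: "d (\<eta> i) = l2 * c i" using p2 i True by auto
    have lc: "l1 * c i < l2 * c i" using l ci by simp
    have "\<eta> i < \<theta> i"
    proof (rule ccontr)
      assume "\<not> \<eta> i < \<theta> i"
      hence le: "\<theta> i \<le> \<eta> i" by simp
      show False
      proof (cases "\<theta> i > 0")
        case True
        have "d (\<theta> i) = l1 * c i" using p1 i True by auto
        moreover have "d (\<eta> i) \<le> d (\<theta> i)"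
          using le dec[of "\<theta> i" "\<eta> i"] r1 r2 i by (cases "\<theta> i = \<eta> i") auto
        ultimately show False using de lc by simp
      next
        case False
        hence "\<theta> i = 0" using r1 i by force
        hence "d 0 \<le> l1 * c i" using z1 i by auto
        moreover have "d (\<eta> i) < d 0" using dec[of 0 "\<eta> i"] r2 i \<open>\<eta> i > 0\<close> by auto
        ultimately show False using de lc by simp
      qed
    qed
    thus ?thesis by simp
  next
    case False
    thus ?thesis using r1 r2 i by force
  qed
  have "(\<Sum>i=1..k. \<eta> i) < (\<Sum>i=1..k. \<theta> i)"
  proof (rule sum_strict_mono_ex1)
    show "\<forall>x\<in>{1..k}. \<eta> x \<le> \<theta> x" using key by blast
    have "k \<in> {1..k}" using k by simp
    moreover have "\<eta> k < \<theta> k" using key[of k] k ek by simp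
    ultimately show "\<exists>a\<in>{1..k}. \<eta> a < \<theta> a" by blast
  qed simp
  thus False using s by simp
qed

lemma cmp_eq:
  fixes d :: "real \<Rightarrow> real" and c :: "nat \<Rightarrow> real"
  assumes dec: "\<And>x y. x \<in> {0..B} \<Longrightarrow> y \<in> {0..B} \<Longrightarrow> x < y \<Longrightarrow> d y < d x"
    and cpos: "\<forall>i\<in>{1..k}. c i > 0"
    and r1: "\<forall>i\<in>{1..k}. 0 \<le> \<theta> i \<and> \<theta> i \<le> B"
    and r2: "\<forall>i\<in>{1..k}. 0 \<le> \<eta> i \<and> \<eta> i \<le> B"
    and p1: "\<forall>i\<in>{1..k}. \<theta> i > 0 \<longrightarrow> d (\<theta> i) = l * c i"
    and z1: "\<forall>i\<in>{1..k}. \<theta> i = 0 \<longrightarrow> d 0 \<le> l * c i"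
    and p2: "\<forall>i\<in>{1..k}. \<eta> i > 0 \<longrightarrow> d (\<eta> i) = l * c i"
    and z2: "\<forall>i\<in>{1..k}. \<eta> i = 0 \<longrightarrow> d 0 \<le> l * c i"
    and i: "i \<in> {1..k}"
  shows "\<theta> i = \<eta> i"
proof -
  have a: "0 \<le> \<theta> i" "\<theta> i \<le> B" "0 \<le> \<eta> i" "\<eta> i \<le> B" using r1 r2 i by auto
  show ?thesis
  proof (cases "\<theta> i > 0"; cases "\<eta> i > 0")
    assume t: "\<theta> i > 0" and e: "\<eta> i > 0"
    have "d (\<theta> i) = d (\<eta> i)" using p1 p2 i t e by auto
    show ?thesis
    proof (rule ccontr)
      assume "\<theta> i \<noteq> \<eta> i"
      hence "\<theta> i < \<eta> i \<or> \<eta> i < \<theta> i" by linarith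
      thus False using dec[of "\<theta> i" "\<eta> i"] dec[of "\<eta> i" "\<theta> i"] a \<open>d (\<theta> i) = d (\<eta> i)\<close> by auto
    qed
  next
    assume t: "\<theta> i > 0" and e: "\<not> \<eta> i > 0"
    have "\<eta> i = 0" using e a by simp
    hence "d 0 \<le> l * c i" using z2 i by auto
    moreover have "d (\<theta> i) = l * c i" using p1 i t by auto
    moreover have "d (\<theta> i) < d 0" using dec[of 0 "\<theta> i"] a t by auto
    ultimately show ?thesis by simp
  next
    assume t: "\<not> \<theta> i > 0" and e: "\<eta> i > 0"
    have "\<theta> i = 0" using t a by simp
    hence "d 0 \<le> l * c i" using z1 i by auto
    moreover have "d (\<eta> i) = l * c i" using p2 i e by auto
    moreover have "d (\<eta> i) < d 0" using dec[of 0 "\<eta> i"] a e by auto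
    ultimately show ?thesis by simp
  next
    assume "\<not> \<theta> i > 0" "\<not> \<eta> i > 0"
    thus ?thesis using a by simp
  qed
qed

theorem proposition3:
  fixes s ds :: "real \<Rightarrow> real" and B b :: real and k :: nat and c :: "nat \<Rightarrow> real"
  assumes "0 < B"
    and "\<forall>x\<in>{0..B}. s x \<ge> 0"
    and "s 0 = 0"
    and "strict_mono_on {0..B} s"
    and "strictly_concave_on {0..B} s"
    and "\<forall>x\<in>{0..B}. (s has_real_derivative ds x) (at x within {0..B})"
    and "continuous_on {0..B} ds"
    and "0 < b" and "b \<le> B"
    and "2 \<le> k"
    and "\<forall>i j. 1 \<le> i \<and> i \<le> j \<and> j \<le> k \<longrightarrow> c j \<le> c i"
    and "\<forall>i\<in>{1..k}. c i > 0"
    and "CAP_solution ds b k c \<theta>"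
    and "CAP_solution ds b k c \<eta>"
  shows "\<forall>i\<in>{1..k}. \<theta> i = \<eta> i"
proof -
  note conc = assms(5) and der = assms(6)
  have dec: "\<And>x y. x \<in> {0..B} \<Longrightarrow> y \<in> {0..B} \<Longrightarrow> x < y \<Longrightarrow> ds y < ds x"
    using ds_strict_decr[OF conc der] by blast
  have B0: "0 \<in> {0..B}" "B \<in> {0..B}" using assms(1) by auto
  have "s B - s 0 \<le> ds 0 * (B - 0)" using tangent[OF conc der B0] .
  moreover have "s 0 < s B" using assms(4) B0 assms(1) unfolding strict_mono_on_def by blast
  ultimately have "ds 0 * B > 0" by simp
  hence d0: "ds 0 > 0" using assms(1) by (simp add: zero_less_mult_iff)
  note S1 = sol_props[OF assms(13) assms(8) assms(10) assms(12) d0]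
  note S2 = sol_props[OF assms(14) assms(8) assms(10) assms(12) d0]
  define l1 where "l1 = ds (\<theta> k) / c k"
  define l2 where "l2 = ds (\<eta> k) / c k"
  have r1: "\<forall>i\<in>{1..k}. 0 \<le> \<theta> i \<and> \<theta> i \<le> B" using S1(2) assms(9) by force
  have r2: "\<forall>i\<in>{1..k}. 0 \<le> \<eta> i \<and> \<eta> i \<le> B" using S2(2) assms(9) by force
  have sm: "(\<Sum>i=1..k. \<theta> i) = (\<Sum>i=1..k. \<eta> i)"
    using assms(13,14) unfolding CAP_solution_def by simp
  have k1: "1 \<le> k" using assms(10) by simp
  show ?thesis
  proof (cases l1 l2 rule: linorder_cases)
    case less
    from cmp_less[OF dec assms(12) k1 r1 r2 sm S2(1) S1(3)[folded l1_def] S1(4)[folded l1_def]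
        S2(3)[folded l2_def] less]
    show ?thesis by blast
  next
    case greater
    from cmp_less[OF dec assms(12) k1 r2 r1 sm[symmetric] S1(1) S2(3)[folded l2_def] S2(4)[folded l2_def]
        S1(3)[folded l1_def] greater]
    show ?thesis by blast
  next
    case equal
    show ?thesis
      using cmp_eq[OF dec assms(12) r1 r2 S1(3)[folded l1_def] S1(4)[folded l1_def]
        S2(3)[folded l2_def, folded equal] S2(4)[folded l2_def, folded equal]] by blast
  qed
qed

end
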